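(* Let $n\ge0$. For every Schröder path $\gamma$ of semi-length $n$, in the poset $\mathcal{S}_n$ we have $|\Delta\gamma|=\omega_H(\gamma)+\omega_{DU}(\gamma)$ and $|\nabla\gamma|=\omega^*_H(\gamma)+\omega_{UD}(\gamma)$. For every Grand Schröder path $\gamma$ of semi-length $n$, in the poset $\mathcal{GS}_n$ we have $|\Delta\gamma|=\omega_H(\gamma)+\omega_{DU}(\gamma)$ and $|\nabla\gamma|=\omega_H(\gamma)+\omega_{UD}(\gamma)$.
   Context: Steps: $U=(1,1)$, $D=(1,-1)$, $H=(2,0)$. A Grand Schröder path of semi-length $n$ is a lattice path from $(0,0)$ to $(2n,0)$ with steps $U,D,H$; a Schröder path is a Grand Schröder path never going below the $x$-axis. $\mathcal{S}_n$ (resp. $\mathcal{GS}_n$) is the set of Schröder (resp. Grand Schröder) paths of semi-length $n$, partially ordered by $\gamma_1\le\gamma_2$ iff $\gamma_1$ lies weakly below $\gamma_2$. $\Delta x$ is the set of elements covering $x$ and $\nabla x$ the set of elements covered by $x$. Paths are identified with words of steps; $\omega_\alpha(\gamma)$ is the number of occurrences of the word $\alpha$ as a factor of $\gamma$; $\omega^*_H(\gamma)$ is the number of $H$ steps of $\gamma$ not lying on the $x$-axis. *)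

theory Defs
  imports Main
begin

datatype step = U | D | H

type_synonym path = "step list"

(* unit-abscissa expansion: U and D advance x by 1, H advances x by 2 at constant height *)
fun unit_moves :: "step \<Rightarrow> int list" where
  "unit_moves U = [1]"
| "unit_moves D = [-1]"
| "unit_moves H = [0, 0]"

definition increments :: "path \<Rightarrow> int list" where
  "increments p = concat (map unit_moves p)"

definition height :: "path \<Rightarrow> nat \<Rightarrow> int" where
  "height p x = sum_list (take x (increments p))"

definition GS :: "nat \<Rightarrow> path set" where
  "GS n = {p. length (increments p) = 2 * n \<and> sum_list (increments p) = 0}"

definition S :: "nat \<Rightarrow> path set" where
  "S n = {p \<in> GS n. \<forall>x \<le> 2 * n. height p x \<ge> 0}"

(* p1 lies weakly below p2 (both piecewise linear with breakpoints at integer abscissas) *)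
definition below :: "path \<Rightarrow> path \<Rightarrow> bool" where
  "below p1 p2 \<longleftrightarrow> (\<forall>x. height p1 x \<le> height p2 x)"

definition strictly_below :: "path \<Rightarrow> path \<Rightarrow> bool" where
  "strictly_below p1 p2 \<longleftrightarrow> below p1 p2 \<and> p1 \<noteq> p2"

definition upcov :: "path set \<Rightarrow> path \<Rightarrow> path set" where
  "upcov P x = {y \<in> P. strictly_below x y \<and> \<not> (\<exists>z\<in>P. strictly_below x z \<and> strictly_below z y)}"

definition downcov :: "path set \<Rightarrow> path \<Rightarrow> path set" where
  "downcov P x = {y \<in> P. strictly_below y x \<and> \<not> (\<exists>z\<in>P. strictly_below y z \<and> strictly_below z x)}"

definition occ :: "step list \<Rightarrow> path \<Rightarrow> nat" where
  "occ a p = card {i. i + length a \<le> length p \<and> take (length a) (drop i p) = a}"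

(* number of H steps not lying on the x-axis *)
definition occ_H_off :: "path \<Rightarrow> nat" where
  "occ_H_off p = card {i. i < length p \<and> p ! i = H \<and> height (take i p) (length (increments (take i p))) \<noteq> 0}"

end

theory Submission
  imports Defs
begin


lemma incr_Nil[simp]: "increments [] = []" by (simp add: increments_def)
lemma incr_Cons[simp]: "increments (s # ys) = unit_moves s @ increments ys" by (simp add: increments_def)
lemma incr_append[simp]: "increments (xs @ ys) = increments xs @ increments ys" by (simp add: increments_def)

lemma um_len: "length (unit_moves s) = (if s = H then 2 else 1)" by (cases s) auto

lemma incr_parity: "even (sum_list (increments q) + int (length (increments q)))"
proof (induction q)
  case Nil then show ?case by simp
next
  case (Cons s q) then show ?case by (cases s) (auto simp: algebra_simps)
qed

lemma incr_elems: "x \<in> set (increments q) \<Longrightarrow> x = -1 \<or> x = 0 \<or> x = 1"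
proof (induction q)
  case Nil then show ?case by simp
next
  case (Cons s q) then show ?case by (cases s) auto
qed

lemma um_ne[simp]: "unit_moves s \<noteq> []" by (cases s) auto

lemma incr_nonempty: "q \<noteq> [] \<Longrightarrow> increments q \<noteq> []"
  by (cases q; cases "hd q") auto

lemma incr_inj: "increments a = increments b \<Longrightarrow> a = b"
proof (induction a arbitrary: b)
  case Nil then show ?case by (cases b) auto
next
  case (Cons s a)
  then show ?case
  proof (cases b)
    case Nil then show ?thesis using Cons.prems by simp
  next
    case (Cons r b')
    with Cons.prems have e: "unit_moves s @ increments a = unit_moves r @ increments b'" by simp
    have "s = r" using e by (cases s; cases r) auto
    then show ?thesis using e Cons Cons.IH by simp
  qed
qed

definition pos :: "path \<Rightarrow> nat \<Rightarrow> nat" where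
  "pos p i = length (increments (take i p))"

lemma height_beyond: "length (increments p) \<le> t \<Longrightarrow> height p t = sum_list (increments p)"
  by (simp add: height_def)

lemma height_step: "\<bar>height p (Suc t) - height p t\<bar> \<le> 1"
proof (cases "t < length (increments p)")
  case True
  have "increments p ! t \<in> set (increments p)" using True by simp
  then have "increments p ! t = -1 \<or> increments p ! t = 0 \<or> increments p ! t = 1" using incr_elems by blast
  then show ?thesis using True by (auto simp: height_def take_Suc_conv_app_nth)
next
  case False then show ?thesis by (simp add: height_beyond)
qed

lemma height_diff: "t < length (increments p) \<Longrightarrow> increments p ! t = height p (Suc t) - height p t"
  by (simp add: height_def take_Suc_conv_app_nth)

lemma decomp: "i < length p \<Longrightarrow>
  increments p = increments (take i p) @ unit_moves (p!i) @ increments (drop (Suc i) p)"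
  by (metis id_take_nth_drop incr_Cons incr_append)

lemma height_pos: "height p (pos p i) = sum_list (increments (take i p))"
proof -
  have "increments p = increments (take i p) @ increments (drop i p)"
    by (metis append_take_drop_id incr_append)
  then show ?thesis by (simp add: height_def pos_def)
qed

lemma pos_Suc: "i < length p \<Longrightarrow> pos p (Suc i) = pos p i + length (unit_moves (p!i))"
  by (simp add: pos_def take_Suc_conv_app_nth)

lemma pos_len: "length p \<le> i \<Longrightarrow> pos p i = length (increments p)"
  by (simp add: pos_def)

lemma pos_0[simp]: "pos p 0 = 0" by (simp add: pos_def)

lemma pos_mono: "i < j \<Longrightarrow> j \<le> length p \<Longrightarrow> pos p i < pos p j"
proof (induction j)
  case 0 then show ?case by simp
next
  case (Suc j)
  have "pos p (Suc j) = pos p j + length (unit_moves (p!j))" using Suc.prems pos_Suc by simp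
  moreover have "length (unit_moves (p!j)) > 0" by (simp add: um_len)
  ultimately show ?case using Suc by (cases "i = j") auto
qed

lemma pos_inj: "i \<le> length p \<Longrightarrow> j \<le> length p \<Longrightarrow> pos p i = pos p j \<Longrightarrow> i = j"
  by (metis linorder_neqE_nat pos_mono less_irrefl)

lemma nth_pos: "i < length p \<Longrightarrow> increments p ! pos p i = hd (unit_moves (p!i))"
proof -
  assume i: "i < length p"
  have "unit_moves (p!i) \<noteq> []" by (cases "p!i") auto
  then show ?thesis using decomp[OF i] by (simp add: pos_def nth_append hd_conv_nth)
qed

lemma nth_pos_H: "i < length p \<Longrightarrow> p!i = H \<Longrightarrow> increments p ! Suc (pos p i) = 0"
  using decomp[of i p] by (simp add: pos_def nth_append)

lemma vert_or_mid: "t \<le> length (increments p) \<Longrightarrow>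
  (\<exists>i\<le>length p. pos p i = t) \<or> (\<exists>i<length p. p!i = H \<and> Suc (pos p i) = t)"
proof (induction p arbitrary: t rule: rev_induct)
  case Nil then show ?case by simp
next
  case (snoc s p)
  have posp: "i \<le> length p \<Longrightarrow> pos (p @ [s]) i = pos p i" for i by (simp add: pos_def)
  have nthp: "i < length p \<Longrightarrow> (p @ [s]) ! i = p ! i" for i by (simp add: nth_append)
  show ?case
  proof (cases "t \<le> length (increments p)")
    case True
    from snoc.IH[OF True] show ?thesis
    proof
      assume "\<exists>i\<le>length p. pos p i = t"
      then obtain i where "i \<le> length p" "pos p i = t" by blast
      then show ?thesis using posp[of i] by (intro disjI1 exI[of _ i]) auto
    next
      assume "\<exists>i<length p. p!i = H \<and> Suc (pos p i) = t"
      then obtain i where "i < length p" "p!i = H" "Suc (pos p i) = t" by blast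
      then show ?thesis using posp[of i] nthp[of i] by (intro disjI2 exI[of _ i]) auto
    qed
  next
    case False
    have e: "pos (p @ [s]) (length p) = length (increments p)" by (simp add: pos_def)
    have e2: "pos (p @ [s]) (Suc (length p)) = length (increments p) + length (unit_moves s)"
      by (simp add: pos_def)
    show ?thesis
    proof (cases "t = length (increments p) + length (unit_moves s)")
      case True then show ?thesis using e2 by (intro disjI1 exI[of _ "Suc (length p)"]) auto
    next
      case f2: False
      then have "s = H" "t = Suc (length (increments p))" using False snoc.prems
        by (cases s; auto)+
      then show ?thesis using e by (intro disjI2 exI[of _ "length p"]) auto
    qed
  qed
qed



lemma key:
  fixes ha hb :: "nat \<Rightarrow> int"
  assumes le: "\<forall>t. ha t \<le> hb t" and t0: "ha t0 < hb t0" and z: "ha 0 = hb 0"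
    and big: "\<forall>t\<ge>L. ha t = hb t"
    and sa: "\<forall>t. \<bar>ha (Suc t) - ha t\<bar> \<le> 1" and sb: "\<forall>t. \<bar>hb (Suc t) - hb t\<bar> \<le> 1"
    and ma: "\<forall>t. odd (ha t + int t) \<longrightarrow> 0 < t \<and> ha (t-1) = ha t \<and> ha (Suc t) = ha t"
    and mb: "\<forall>t. odd (hb t + int t) \<longrightarrow> 0 < t \<and> hb (t-1) = hb t \<and> hb (Suc t) = hb t"
  shows "\<exists>t. ha t < hb t \<and> (odd (ha t + int t) \<or> (0 < t \<and> ha (t-1) = ha t + 1 \<and> ha (Suc t) = ha t + 1))"
proof -
  define T where "T = {t. ha t < hb t}"
  have fin: "finite T"
  proof (rule finite_subset[of _ "{..<L}"])
    show "T \<subseteq> {..<L}" using big unfolding T_def by (metis (mono_tags, lifting) lessThan_iff linorder_not_less mem_Collect_eq order_less_irrefl subsetI)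
  qed simp
  have ne: "T \<noteq> {}" using t0 T_def by blast
  define m where "m = Min (ha ` T)"
  have "m \<in> ha ` T" using fin ne m_def by simp
  then obtain t where tT: "t \<in> T" and tm: "ha t = m" by blast
  have minT: "\<And>s. s \<in> T \<Longrightarrow> m \<le> ha s" using fin m_def by simp
  show ?thesis
  proof (cases "odd (ha t + int t)")
    case True then show ?thesis using tT T_def by blast
  next
    case ev: False
    have tpos: "0 < t" using tT z T_def by (cases t) auto
    then obtain t' where tt: "t = Suc t'" using not0_implies_Suc by blast
    have hbt: "hb t \<ge> m + 1" using tT tm T_def by simp
    have A: "ha t' = m + 1 \<or> (t' \<in> T \<and> odd (ha t' + int t'))"
    proof -
      have s1: "\<bar>ha t - ha t'\<bar> \<le> 1" using sa tt by metis
      have s2: "\<bar>hb t - hb t'\<bar> \<le> 1" using sb tt by metis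
      have c1: "ha t' \<noteq> m - 1"
      proof
        assume "ha t' = m - 1"
        then have "t' \<in> T" using s2 hbt T_def by simp
        then show False using minT \<open>ha t' = m - 1\<close> by fastforce
      qed
      show ?thesis
      proof (cases "ha t' = m")
        case True
        have o: "odd (ha t' + int t')" using ev True tm tt by simp
        have "hb t' \<noteq> m"
        proof
          assume h: "hb t' = m"
          then have "hb t = m + 1" using s2 hbt by simp
          then have "odd (hb t + int t)" using ev tm by simp
          then have "hb (t - 1) = hb t" using mb by blast
          then show False using h tt \<open>hb t = m + 1\<close> by simp
        qed
        then have "t' \<in> T" using s2 hbt True T_def by simp
        then show ?thesis using o by blast
      next
        case False then show ?thesis using s1 c1 tm by auto
      qed
    qed
    have B: "ha (Suc t) = m + 1 \<or> (Suc t \<in> T \<and> odd (ha (Suc t) + int (Suc t)))"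
    proof -
      have s1: "\<bar>ha (Suc t) - ha t\<bar> \<le> 1" using sa by metis
      have s2: "\<bar>hb (Suc t) - hb t\<bar> \<le> 1" using sb by metis
      have c1: "ha (Suc t) \<noteq> m - 1"
      proof
        assume "ha (Suc t) = m - 1"
        then have "Suc t \<in> T" using s2 hbt T_def by simp
        then show False using minT \<open>ha (Suc t) = m - 1\<close> by fastforce
      qed
      show ?thesis
      proof (cases "ha (Suc t) = m")
        case True
        have o: "odd (ha (Suc t) + int (Suc t))" using ev True tm by simp
        have "hb (Suc t) \<noteq> m"
        proof
          assume h: "hb (Suc t) = m"
          then have "hb t = m + 1" using s2 hbt by simp
          then have "odd (hb t + int t)" using ev tm by simp
          then have "hb (Suc t) = hb t" using mb by blast
          then show False using h \<open>hb t = m + 1\<close> by simp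
        qed
        then have "Suc t \<in> T" using s2 hbt True T_def by simp
        then show ?thesis using o by blast
      next
        case False then show ?thesis using s1 c1 tm by auto
      qed
    qed
    show ?thesis
    proof (cases "t' \<in> T \<and> odd (ha t' + int t')")
      case True then show ?thesis using T_def by blast
    next
      case F1: False
      show ?thesis
      proof (cases "Suc t \<in> T \<and> odd (ha (Suc t) + int (Suc t))")
        case True then show ?thesis using T_def by blast
      next
        case False
        then have "ha t' = m + 1" "ha (Suc t) = m + 1" using A B F1 by auto
        then show ?thesis using tT T_def tm tt tpos by (intro exI[of _ t]) auto
      qed
    qed
  qed
qed



lemma vert_parity: "even (height p (pos p i) + int (pos p i))"
  using incr_parity[of "take i p"] height_pos[of p i] by (simp add: pos_def)

lemma mid_len: "i < length p \<Longrightarrow> p!i = H \<Longrightarrow> Suc (Suc (pos p i)) \<le> length (increments p)"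
  using decomp[of i p] by (simp add: pos_def)

lemma mid_height: assumes "i < length p" "p!i = H"
  shows "height p (Suc (pos p i)) = height p (pos p i)"
    "height p (Suc (Suc (pos p i))) = height p (pos p i)"
proof -
  have l: "Suc (Suc (pos p i)) \<le> length (increments p)" using mid_len assms .
  have a: "increments p ! pos p i = 0" using nth_pos[OF assms(1)] assms(2) by simp
  have b: "increments p ! Suc (pos p i) = 0" using nth_pos_H assms .
  show "height p (Suc (pos p i)) = height p (pos p i)" using height_diff[of "pos p i" p] a l by simp
  then show "height p (Suc (Suc (pos p i))) = height p (pos p i)"
    using height_diff[of "Suc (pos p i)" p] b l by simp
qed

lemma mid_idx: assumes "odd (height p t + int t)" "t \<le> length (increments p)"
  shows "\<exists>i<length p. p!i = H \<and> Suc (pos p i) = t"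
  using vert_or_mid[OF assms(2)] vert_parity[of p] assms(1) by auto

lemma mid_prop: assumes "odd (height p t + int t)"
  shows "0 < t \<and> height p (t-1) = height p t \<and> height p (Suc t) = height p t"
proof (cases "t \<le> length (increments p)")
  case True
  then obtain i where i: "i<length p" "p!i = H" "Suc (pos p i) = t" using mid_idx assms by blast
  then show ?thesis using mid_height[OF i(1,2)] by auto
next
  case False
  then show ?thesis using height_beyond[of p t] height_beyond[of p "t-1"] height_beyond[of p "Suc t"] by auto
qed



definition mvu :: "path \<Rightarrow> nat \<Rightarrow> path" where
  "mvu p i = (if p!i = H then take i p @ [U,D] @ drop (Suc i) p else take i p @ [H] @ drop (Suc (Suc i)) p)"
definition mvd :: "path \<Rightarrow> nat \<Rightarrow> path" where
  "mvd p i = (if p!i = H then take i p @ [D,U] @ drop (Suc i) p else take i p @ [H] @ drop (Suc (Suc i)) p)"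
definition IH :: "path \<Rightarrow> nat set" where "IH p = {i. i < length p \<and> p!i = H}"
definition IDU :: "path \<Rightarrow> nat set" where "IDU p = {i. Suc i < length p \<and> p!i = D \<and> p!Suc i = U}"
definition IUD :: "path \<Rightarrow> nat set" where "IUD p = {i. Suc i < length p \<and> p!i = U \<and> p!Suc i = D}"

lemma G: "length (A::int list) = k \<Longrightarrow> sum_list (take x (A @ [u1+c, u2-c] @ B)) =
   sum_list (take x (A @ [u1,u2] @ B)) + (if x = Suc k then c else 0)"
proof -
  assume k: "length A = k"
  consider "x \<le> k" | "x = Suc k" | "Suc (Suc k) \<le> x" by linarith
  then show ?thesis
  proof cases
    case 1 then show ?thesis using k by (simp add: take_append algebra_simps)
  next
    case 2 then show ?thesis using k by (simp add: take_append algebra_simps)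
  next
    case 3
    then obtain j where "x = Suc (Suc k) + j" using le_Suc_ex by blast
    then show ?thesis using k by (simp add: take_append algebra_simps)
  qed
qed

lemma split1: "i < length p \<Longrightarrow> p = take i p @ p!i # drop (Suc i) p"
  by (simp add: id_take_nth_drop)

lemma split2: "Suc i < length p \<Longrightarrow> p = take i p @ p!i # p!Suc i # drop (Suc (Suc i)) p"
  by (metis Cons_nth_drop_Suc Suc_lessD append_take_drop_id)

lemma mvu_incr:
  assumes "i \<in> IH p \<union> IDU p"
  shows "\<exists>A u1 u2 B. increments p = A @ [u1,u2] @ B \<and> length A = pos p i \<and>
    increments (mvu p i) = A @ [u1+1,u2-1] @ B"
proof (cases "i \<in> IH p")
  case True
  then have i: "i < length p" "p!i = H" by (auto simp: IH_def)
  have e: "increments p = increments (take i p) @ [0,0] @ increments (drop (Suc i) p)"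
    using arg_cong[OF split1[OF i(1)], of increments] i(2) by simp
  show ?thesis
    by (rule exI[of _ "increments (take i p)"], rule exI[of _ 0], rule exI[of _ 0],
        rule exI[of _ "increments (drop (Suc i) p)"]) (simp add: e pos_def mvu_def i)
next
  case False
  then have i: "Suc i < length p" "p!i = D" "p!Suc i = U" using assms by (auto simp: IDU_def)
  have e: "increments p = increments (take i p) @ [-1,1] @ increments (drop (Suc (Suc i)) p)"
    using arg_cong[OF split2[OF i(1)], of increments] i(2,3) by simp
  show ?thesis
    by (rule exI[of _ "increments (take i p)"], rule exI[of _ "-1"], rule exI[of _ 1],
        rule exI[of _ "increments (drop (Suc (Suc i)) p)"]) (simp add: e pos_def mvu_def i)
qed

lemma mvd_incr:
  assumes "i \<in> IH p \<union> IUD p"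
  shows "\<exists>A u1 u2 B. increments p = A @ [u1,u2] @ B \<and> length A = pos p i \<and>
    increments (mvd p i) = A @ [u1-1,u2+1] @ B"
proof (cases "i \<in> IH p")
  case True
  then have i: "i < length p" "p!i = H" by (auto simp: IH_def)
  have e: "increments p = increments (take i p) @ [0,0] @ increments (drop (Suc i) p)"
    using arg_cong[OF split1[OF i(1)], of increments] i(2) by simp
  show ?thesis
    by (rule exI[of _ "increments (take i p)"], rule exI[of _ 0], rule exI[of _ 0],
        rule exI[of _ "increments (drop (Suc i) p)"]) (simp add: e pos_def mvd_def i)
next
  case False
  then have i: "Suc i < length p" "p!i = U" "p!Suc i = D" using assms by (auto simp: IUD_def)
  have e: "increments p = increments (take i p) @ [1,-1] @ increments (drop (Suc (Suc i)) p)"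
    using arg_cong[OF split2[OF i(1)], of increments] i(2,3) by simp
  show ?thesis
    by (rule exI[of _ "increments (take i p)"], rule exI[of _ 1], rule exI[of _ "-1"],
        rule exI[of _ "increments (drop (Suc (Suc i)) p)"]) (simp add: e pos_def mvd_def i)
qed

lemma mvu_height: assumes "i \<in> IH p \<union> IDU p"
  shows "height (mvu p i) x = height p x + (if x = Suc (pos p i) then 1 else 0)"
    "length (increments (mvu p i)) = length (increments p)"
    "sum_list (increments (mvu p i)) = sum_list (increments p)"
proof -
  obtain A u1 u2 B where e: "increments p = A @ [u1,u2] @ B" "length A = pos p i"
    "increments (mvu p i) = A @ [u1+1,u2-1] @ B" using mvu_incr[OF assms] by blast
  show "height (mvu p i) x = height p x + (if x = Suc (pos p i) then 1 else 0)"
    using G[OF e(2), of x u1 1 u2 B] by (simp add: height_def e)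
  show "length (increments (mvu p i)) = length (increments p)" using e by simp
  show "sum_list (increments (mvu p i)) = sum_list (increments p)" using e by simp
qed

lemma mvd_height: assumes "i \<in> IH p \<union> IUD p"
  shows "height (mvd p i) x = height p x - (if x = Suc (pos p i) then 1 else 0)"
    "length (increments (mvd p i)) = length (increments p)"
    "sum_list (increments (mvd p i)) = sum_list (increments p)"
proof -
  obtain A u1 u2 B where e: "increments p = A @ [u1,u2] @ B" "length A = pos p i"
    "increments (mvd p i) = A @ [u1-1,u2+1] @ B" using mvd_incr[OF assms] by blast
  have "A @ [u1-1,u2+1] @ B = A @ [u1+(-1),u2-(-1)] @ B" by simp
  then show "height (mvd p i) x = height p x - (if x = Suc (pos p i) then 1 else 0)"
    using G[OF e(2), of x u1 "-1" u2 B] by (simp add: height_def e)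
  show "length (increments (mvd p i)) = length (increments p)" using e by simp
  show "sum_list (increments (mvd p i)) = sum_list (increments p)" using e by simp
qed



lemma GS_len: "p \<in> GS n \<Longrightarrow> length (increments p) = 2*n" by (simp add: GS_def)
lemma GS_h0: "height p 0 = 0" by (simp add: height_def)
lemma GS_hbig: "p \<in> GS n \<Longrightarrow> 2*n \<le> t \<Longrightarrow> height p t = 0"
  by (simp add: GS_def height_beyond)

lemma GS_inj: assumes "a \<in> GS n" "b \<in> GS n" "\<forall>x. height a x = height b x" shows "a = b"
proof -
  have "increments a = increments b"
  proof (rule nth_equalityI)
    show "length (increments a) = length (increments b)" using assms GS_len by simp
    fix k assume "k < length (increments a)"
    then show "increments a ! k = increments b ! k"
      using height_diff[of k a] height_diff[of k b] assms GS_len by simp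
  qed
  then show ?thesis by (rule incr_inj)
qed

lemma unit_cover:
  assumes a: "a \<in> GS n" and b: "b \<in> GS n" and P: "P \<subseteq> GS n"
    and h: "\<forall>x. height b x = height a x + (if x = t then 1 else 0)"
  shows "strictly_below a b \<and> \<not> (\<exists>z\<in>P. strictly_below a z \<and> strictly_below z b)"
proof
  have ne: "a \<noteq> b" using h[rule_format, of t] by auto
  show "strictly_below a b" using ne h by (auto simp: strictly_below_def below_def)
  show "\<not> (\<exists>z\<in>P. strictly_below a z \<and> strictly_below z b)"
  proof
    assume "\<exists>z\<in>P. strictly_below a z \<and> strictly_below z b"
    then obtain z where z: "z \<in> GS n" "below a z" "below z b" "z \<noteq> a" "z \<noteq> b"
      using P by (auto simp: strictly_below_def)
    have r: "\<forall>x. x \<noteq> t \<longrightarrow> height z x = height a x"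
    proof (intro allI impI)
      fix x assume "x \<noteq> t"
      have "height a x \<le> height z x" "height z x \<le> height b x" using z(2,3) unfolding below_def by auto
      moreover have "height b x = height a x" using h \<open>x \<noteq> t\<close> by simp
      ultimately show "height z x = height a x" by linarith
    qed
    show False
    proof (cases "height z t = height a t")
      case True
      then have "\<forall>x. height a x = height z x" using r by metis
      then show False using GS_inj[OF a z(1)] z(4) by simp
    next
      case False
      have "height a t \<le> height z t" "height z t \<le> height b t" using z(2,3) unfolding below_def by auto
      moreover have "height b t = height a t + 1" using h by simp
      ultimately have "height z t = height b t" using False by linarith
      then have "\<forall>x. height z x = height b x" using r h by auto
      then show False using GS_inj[OF z(1) b] z(5) by simp
    qed
  qed
qed

lemma mvu_GS: "p \<in> GS n \<Longrightarrow> i \<in> IH p \<union> IDU p \<Longrightarrow> mvu p i \<in> GS n"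
  using mvu_height by (simp add: GS_def)
lemma mvd_GS: "p \<in> GS n \<Longrightarrow> i \<in> IH p \<union> IUD p \<Longrightarrow> mvd p i \<in> GS n"
  using mvd_height by (simp add: GS_def)



lemma odd_neg: "odd (- x + (y::int)) = odd (x + y)" by presburger

lemma heights_ok: "\<forall>t. \<bar>height p (Suc t) - height p t\<bar> \<le> 1"
  "\<forall>t. odd (height p t + int t) \<longrightarrow> 0 < t \<and> height p (t-1) = height p t \<and> height p (Suc t) = height p t"
  using height_step mid_prop by auto

lemma exdiff: assumes "a \<in> GS n" "b \<in> GS n" "a \<noteq> b" shows "\<exists>x. height a x \<noteq> height b x"
  using GS_inj assms by blast

lemma witness_idx:
  assumes a: "a \<in> GS n" and tl: "t < 2*n"
    and w: "odd (height a t + int t) \<or> (0 < t \<and> height a (t-1) = height a t + e \<and> height a (Suc t) = height a t + e)"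
    and e: "e = 1 \<or> e = -1"
  shows "(\<exists>i\<in>IH a. Suc (pos a i) = t) \<or>
         (e = 1 \<and> (\<exists>i\<in>IDU a. Suc (pos a i) = t)) \<or> (e = -1 \<and> (\<exists>i\<in>IUD a. Suc (pos a i) = t))"
proof (cases "odd (height a t + int t)")
  case True
  then obtain i where "i<length a" "a!i = H" "Suc (pos a i) = t"
    using mid_idx[OF True] GS_len[OF a] tl by auto
  then show ?thesis by (auto simp: IH_def)
next
  case ev: False
  with w have v: "0 < t" "height a (t-1) = height a t + e" "height a (Suc t) = height a t + e" by auto
  have tle: "t \<le> length (increments a)" using tl GS_len[OF a] by simp
  have "\<not> (\<exists>i<length a. a!i = H \<and> Suc (pos a i) = t)"
  proof
    assume "\<exists>i<length a. a!i = H \<and> Suc (pos a i) = t"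
    then obtain i where i: "i<length a" "a!i = H" "Suc (pos a i) = t" by blast
    have "even (height a (pos a i) + int (pos a i))" by (rule vert_parity)
    then show False using ev mid_height(1)[OF i(1,2)] i(3) by auto
  qed
  then obtain i where i: "i \<le> length a" "pos a i = t" using vert_or_mid[OF tle] by blast
  have il: "i < length a"
  proof (rule ccontr)
    assume "\<not> i < length a"
    then have "pos a i = length (increments a)" using pos_len by simp
    then show False using i(2) tl GS_len[OF a] by simp
  qed
  have "i \<noteq> 0" using i(2) v(1) pos_0[of a] by (metis less_irrefl)
  then obtain j where ij: "i = Suc j" using not0_implies_Suc by blast
  have jl: "j < length a" using il ij by simp
  have wt: "increments a ! t = e" using height_diff[of t a] v(3) tl GS_len[OF a] by simp
  have ai: "hd (unit_moves (a!i)) = e" using nth_pos[OF il] i(2) wt by simp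
  have ps: "pos a i = pos a j + length (unit_moves (a!j))" using pos_Suc[OF jl] ij by simp
  have wt1: "increments a ! (t - 1) = - e"
    using height_diff[of "t-1" a] v(1,2) tl GS_len[OF a] by simp
  show ?thesis
  proof (cases "a!j")
    case U
    then have "pos a j = t - 1" using ps i(2) by simp
    then have "increments a ! (t-1) = 1" using nth_pos[OF jl] U by simp
    then have "e = -1" using wt1 e by auto
    then have "a!i = D" using ai by (cases "a!i") auto
    then show ?thesis using U ij il \<open>pos a j = t - 1\<close> v(1) \<open>e = -1\<close> by (auto simp: IUD_def)
  next
    case D
    then have "pos a j = t - 1" using ps i(2) by simp
    then have "increments a ! (t-1) = -1" using nth_pos[OF jl] D by simp
    then have "e = 1" using wt1 e by auto
    then have "a!i = U" using ai by (cases "a!i") auto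
    then show ?thesis using D ij il \<open>pos a j = t - 1\<close> v(1) \<open>e = 1\<close> by (auto simp: IDU_def)
  next
    case H
    then have "Suc (pos a j) = t - 1" using ps i(2) by simp
    then have "increments a ! (t-1) = 0" using nth_pos_H[OF jl H] by simp
    then show ?thesis using wt1 e by auto
  qed
qed



lemma key_up: assumes a: "a \<in> GS n" and b: "b \<in> GS n" and sb: "strictly_below a b"
  shows "\<exists>i\<in>IH a \<union> IDU a. below (mvu a i) b"
proof -
  have le: "\<forall>t. height a t \<le> height b t" using sb by (simp add: strictly_below_def below_def)
  have "a \<noteq> b" using sb by (auto simp: strictly_below_def)
  then obtain x where "height a x \<noteq> height b x" using exdiff[OF a b] by blast
  then have x: "height a x < height b x" using le by (metis order_le_less)
  have big: "\<forall>t\<ge>2*n. height a t = height b t" using GS_hbig a b by simp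
  have z0: "height a 0 = height b 0" by (simp add: GS_h0)
  obtain t where t: "height a t < height b t"
    "odd (height a t + int t) \<or> (0 < t \<and> height a (t-1) = height a t + 1 \<and> height a (Suc t) = height a t + 1)"
    using key[OF le x z0 big heights_ok(1) heights_ok(1) heights_ok(2) heights_ok(2)] by blast
  have tl: "t < 2*n" using t(1) big by (metis less_irrefl not_less)
  from witness_idx[OF a tl t(2)] obtain i where i: "i \<in> IH a \<union> IDU a" "Suc (pos a i) = t" by auto
  have "below (mvu a i) b" unfolding below_def
  proof
    fix y show "height (mvu a i) y \<le> height b y"
      using mvu_height(1)[OF i(1), of y] le t(1) i(2) by (cases "y = t") auto
  qed
  then show ?thesis using i by blast
qed

lemma key_down: assumes a: "a \<in> GS n" and b: "b \<in> GS n" and sb: "strictly_below b a"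
  shows "\<exists>i\<in>IH a \<union> IUD a. below b (mvd a i)"
proof -
  define ha where "ha = (\<lambda>t. - height a t)"
  define hb where "hb = (\<lambda>t. - height b t)"
  have le: "\<forall>t. ha t \<le> hb t" using sb by (simp add: strictly_below_def below_def ha_def hb_def)
  have "a \<noteq> b" using sb by (auto simp: strictly_below_def)
  then obtain x where "height a x \<noteq> height b x" using exdiff[OF a b] by blast
  then have x: "ha x < hb x" using le by (metis order_le_less neg_equal_iff_equal ha_def hb_def)
  have big: "\<forall>t\<ge>2*n. ha t = hb t" using GS_hbig a b by (simp add: ha_def hb_def)
  have sa: "\<forall>t. \<bar>ha (Suc t) - ha t\<bar> \<le> 1" proof
    fix t show "\<bar>ha (Suc t) - ha t\<bar> \<le> 1" using height_step[of a t] by (simp add: ha_def abs_le_iff)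
  qed
  have sb': "\<forall>t. \<bar>hb (Suc t) - hb t\<bar> \<le> 1" proof
    fix t show "\<bar>hb (Suc t) - hb t\<bar> \<le> 1" using height_step[of b t] by (simp add: hb_def abs_le_iff)
  qed
  have ma: "\<forall>t. odd (ha t + int t) \<longrightarrow> 0 < t \<and> ha (t-1) = ha t \<and> ha (Suc t) = ha t"
    using heights_ok(2)[of a] unfolding ha_def odd_neg by simp
  have mb: "\<forall>t. odd (hb t + int t) \<longrightarrow> 0 < t \<and> hb (t-1) = hb t \<and> hb (Suc t) = hb t"
    using heights_ok(2)[of b] unfolding hb_def odd_neg by simp
  have z: "ha 0 = hb 0" using GS_h0 by (simp add: ha_def hb_def)
  obtain t where t: "ha t < hb t"
    "odd (ha t + int t) \<or> (0 < t \<and> ha (t-1) = ha t + 1 \<and> ha (Suc t) = ha t + 1)"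
    using key[OF le x z big sa sb' ma mb] by blast
  have t1: "height b t < height a t" using t(1) by (simp add: ha_def hb_def)
  have t2: "odd (height a t + int t) \<or> (0 < t \<and> height a (t-1) = height a t + -1 \<and> height a (Suc t) = height a t + -1)"
    using t(2) unfolding ha_def odd_neg by auto
  have tl: "t < 2*n" using t1 GS_hbig a b by (metis less_irrefl not_less)
  from witness_idx[OF a tl t2] obtain i where i: "i \<in> IH a \<union> IUD a" "Suc (pos a i) = t" by auto
  have "below b (mvd a i)" unfolding below_def
  proof
    fix y show "height b y \<le> height (mvd a i) y"
      using mvd_height(1)[OF i(1), of y] sb t1 i(2) by (cases "y = t") (auto simp: strictly_below_def below_def)
  qed
  then show ?thesis using i by blast
qed



definition upclosed :: "nat \<Rightarrow> path set \<Rightarrow> bool" where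
  "upclosed n P \<longleftrightarrow> P \<subseteq> GS n \<and> (\<forall>u\<in>P. \<forall>z\<in>GS n. below u z \<longrightarrow> z \<in> P)"

lemma upcov_eq: assumes P: "upclosed n P" and a: "a \<in> P"
  shows "upcov P a = mvu a ` (IH a \<union> IDU a)"
proof
  have aG: "a \<in> GS n" using P a by (auto simp: upclosed_def)
  show "mvu a ` (IH a \<union> IDU a) \<subseteq> upcov P a"
  proof
    fix y assume "y \<in> mvu a ` (IH a \<union> IDU a)"
    then obtain i where i: "i \<in> IH a \<union> IDU a" "y = mvu a i" by blast
    have yG: "y \<in> GS n" using mvu_GS[OF aG i(1)] i(2) by simp
    have h: "\<forall>x. height y x = height a x + (if x = Suc (pos a i) then 1 else 0)"
      using mvu_height(1)[OF i(1)] i(2) by simp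
    have c: "strictly_below a y \<and> \<not> (\<exists>z\<in>P. strictly_below a z \<and> strictly_below z y)"
      using unit_cover[OF aG yG _ h] P by (auto simp: upclosed_def)
    then have "y \<in> P" using P a yG by (auto simp: upclosed_def strictly_below_def)
    then show "y \<in> upcov P a" using c by (simp add: upcov_def)
  qed
  show "upcov P a \<subseteq> mvu a ` (IH a \<union> IDU a)"
  proof
    fix y assume y: "y \<in> upcov P a"
    then have yP: "y \<in> P" and sb: "strictly_below a y"
      and nc: "\<not> (\<exists>z\<in>P. strictly_below a z \<and> strictly_below z y)" by (auto simp: upcov_def)
    have yG: "y \<in> GS n" using P yP by (auto simp: upclosed_def)
    obtain i where i: "i \<in> IH a \<union> IDU a" "below (mvu a i) y" using key_up[OF aG yG sb] by blast
    define z where "z = mvu a i"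
    have zG: "z \<in> GS n" using mvu_GS[OF aG i(1)] z_def by simp
    have h: "\<forall>x. height z x = height a x + (if x = Suc (pos a i) then 1 else 0)"
      using mvu_height(1)[OF i(1)] z_def by simp
    have saz: "strictly_below a z" using unit_cover[OF aG zG _ h] P by (auto simp: upclosed_def)
    have zP: "z \<in> P" using P a zG saz by (auto simp: upclosed_def strictly_below_def)
    have "z = y"
    proof (rule ccontr)
      assume "z \<noteq> y"
      then have "strictly_below z y" using i(2) z_def by (simp add: strictly_below_def)
      then show False using nc zP saz by blast
    qed
    then show "y \<in> mvu a ` (IH a \<union> IDU a)" using i(1) z_def by blast
  qed
qed

lemma downcov_eq: assumes P: "upclosed n P" and a: "a \<in> P"
  shows "downcov P a = mvd a ` {i \<in> IH a \<union> IUD a. mvd a i \<in> P}"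
proof
  have aG: "a \<in> GS n" using P a by (auto simp: upclosed_def)
  show "mvd a ` {i \<in> IH a \<union> IUD a. mvd a i \<in> P} \<subseteq> downcov P a"
  proof
    fix y assume "y \<in> mvd a ` {i \<in> IH a \<union> IUD a. mvd a i \<in> P}"
    then obtain i where i: "i \<in> IH a \<union> IUD a" "y = mvd a i" "y \<in> P" by blast
    have yG: "y \<in> GS n" using mvd_GS[OF aG i(1)] i(2) by simp
    have h: "\<forall>x. height a x = height y x + (if x = Suc (pos a i) then 1 else 0)"
      using mvd_height(1)[OF i(1)] i(2) by simp
    have c: "strictly_below y a \<and> \<not> (\<exists>z\<in>P. strictly_below y z \<and> strictly_below z a)"
      using unit_cover[OF yG aG _ h] P by (auto simp: upclosed_def)
    then show "y \<in> downcov P a" using i(3) by (simp add: downcov_def)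
  qed
  show "downcov P a \<subseteq> mvd a ` {i \<in> IH a \<union> IUD a. mvd a i \<in> P}"
  proof
    fix y assume y: "y \<in> downcov P a"
    then have yP: "y \<in> P" and sb: "strictly_below y a"
      and nc: "\<not> (\<exists>z\<in>P. strictly_below y z \<and> strictly_below z a)" by (auto simp: downcov_def)
    have yG: "y \<in> GS n" using P yP by (auto simp: upclosed_def)
    obtain i where i: "i \<in> IH a \<union> IUD a" "below y (mvd a i)" using key_down[OF aG yG sb] by blast
    define z where "z = mvd a i"
    have zG: "z \<in> GS n" using mvd_GS[OF aG i(1)] z_def by simp
    have h: "\<forall>x. height a x = height z x + (if x = Suc (pos a i) then 1 else 0)"
      using mvd_height(1)[OF i(1)] z_def by simp
    have sza: "strictly_below z a" using unit_cover[OF zG aG _ h] P by (auto simp: upclosed_def)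
    have zP: "z \<in> P" using P yP zG i(2) z_def by (auto simp: upclosed_def)
    have "z = y"
    proof (rule ccontr)
      assume "z \<noteq> y"
      then have "strictly_below y z" using i(2) z_def by (auto simp: strictly_below_def)
      then show False using nc zP sza by blast
    qed
    then show "y \<in> mvd a ` {i \<in> IH a \<union> IUD a. mvd a i \<in> P}" using i(1) z_def zP by blast
  qed
qed

lemma idx_bound: "i \<in> IH a \<union> IDU a \<union> IUD a \<Longrightarrow> i < length a"
  by (auto simp: IH_def IDU_def IUD_def)

lemma inj_mvu: "inj_on (mvu a) (IH a \<union> IDU a)"
proof
  fix i j assume i: "i \<in> IH a \<union> IDU a" and j: "j \<in> IH a \<union> IDU a" and e: "mvu a i = mvu a j"
  have "height (mvu a i) (Suc (pos a i)) = height (mvu a j) (Suc (pos a i))" using e by simp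
  then have "pos a i = pos a j" using mvu_height(1)[OF i] mvu_height(1)[OF j] by (simp split: if_splits)
  then show "i = j" using pos_inj idx_bound i j by (meson Un_iff less_imp_le)
qed

lemma inj_mvd: "inj_on (mvd a) (IH a \<union> IUD a)"
proof
  fix i j assume i: "i \<in> IH a \<union> IUD a" and j: "j \<in> IH a \<union> IUD a" and e: "mvd a i = mvd a j"
  have "height (mvd a i) (Suc (pos a i)) = height (mvd a j) (Suc (pos a i))" using e by simp
  then have "pos a i = pos a j" using mvd_height(1)[OF i] mvd_height(1)[OF j] by (simp split: if_splits)
  then show "i = j" using pos_inj idx_bound i j by (meson Un_iff less_imp_le)
qed

lemma fin_IH: "finite (IH a)" by (rule finite_subset[of _ "{..<length a}"]) (auto simp: IH_def)
lemma fin_IDU: "finite (IDU a)"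
proof (rule finite_subset[of _ "{..<length a}"])
  show "IDU a \<subseteq> {..<length a}" by (auto simp: IDU_def)
qed simp
lemma fin_IUD: "finite (IUD a)"
proof (rule finite_subset[of _ "{..<length a}"])
  show "IUD a \<subseteq> {..<length a}" by (auto simp: IUD_def)
qed simp
lemmas fin_idx = fin_IH fin_IDU fin_IUD

lemma card_up: assumes "upclosed n P" "a \<in> P"
  shows "card (upcov P a) = card (IH a) + card (IDU a)"
proof -
  have "card (upcov P a) = card (IH a \<union> IDU a)"
    using upcov_eq[OF assms] card_image[OF inj_mvu] by simp
  also have "\<dots> = card (IH a) + card (IDU a)"
    by (rule card_Un_disjoint[OF fin_IH fin_IDU]) (auto simp: IH_def IDU_def)
  finally show ?thesis .
qed

lemma card_down: assumes "upclosed n P" "a \<in> P"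
  shows "card (downcov P a) = card {i \<in> IH a \<union> IUD a. mvd a i \<in> P}"
proof -
  have s: "{i \<in> IH a \<union> IUD a. mvd a i \<in> P} \<subseteq> IH a \<union> IUD a" by blast
  show ?thesis using downcov_eq[OF assms] card_image[OF inj_on_subset[OF inj_mvd s]] by simp
qed



lemma occ1: "occ [H] p = card (IH p)"
proof -
  have "{i. i + length [H] \<le> length p \<and> take (length [H]) (drop i p) = [H]} = IH p"
  proof (rule set_eqI, rule iffI)
    fix i assume "i \<in> {i. i + length [H] \<le> length p \<and> take (length [H]) (drop i p) = [H]}"
    then have "i < length p" "take 1 (drop i p) = [H]" by auto
    then show "i \<in> IH p" using Cons_nth_drop_Suc[of i p] by (auto simp: IH_def simp del: Cons_nth_drop_Suc dest: sym)
  next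
    fix i assume "i \<in> IH p"
    then show "i \<in> {i. i + length [H] \<le> length p \<and> take (length [H]) (drop i p) = [H]}"
      using Cons_nth_drop_Suc[of i p] by (auto simp: IH_def dest: sym)
  qed
  then show ?thesis by (simp add: occ_def)
qed

lemma occ2: "occ [x, y] p = card {i. Suc i < length p \<and> p!i = x \<and> p!Suc i = y}"
proof -
  have "{i. i + length [x,y] \<le> length p \<and> take (length [x,y]) (drop i p) = [x,y]} =
        {i. Suc i < length p \<and> p!i = x \<and> p!Suc i = y}"
  proof (rule set_eqI, rule iffI)
    fix i assume "i \<in> {i. i + length [x,y] \<le> length p \<and> take (length [x,y]) (drop i p) = [x,y]}"
    then have l: "Suc i < length p" and t: "take (Suc (Suc 0)) (drop i p) = [x,y]" by auto
    have "drop i p = p!i # p!Suc i # drop (Suc (Suc i)) p"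
      using l by (metis Cons_nth_drop_Suc Suc_lessD)
    then show "i \<in> {i. Suc i < length p \<and> p!i = x \<and> p!Suc i = y}" using l t by simp
  next
    fix i assume "i \<in> {i. Suc i < length p \<and> p!i = x \<and> p!Suc i = y}"
    then have l: "Suc i < length p" and e: "p!i = x" "p!Suc i = y" by auto
    have "drop i p = p!i # p!Suc i # drop (Suc (Suc i)) p"
      using l by (metis Cons_nth_drop_Suc Suc_lessD)
    then show "i \<in> {i. i + length [x,y] \<le> length p \<and> take (length [x,y]) (drop i p) = [x,y]}"
      using l e by simp
  qed
  then show ?thesis by (simp add: occ_def)
qed

lemma occ_DU: "occ [D,U] p = card (IDU p)" by (simp add: occ2 IDU_def)
lemma occ_UD: "occ [U,D] p = card (IUD p)" by (simp add: occ2 IUD_def)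

lemma occ_off: "occ_H_off p = card {i \<in> IH p. height p (pos p i) \<noteq> 0}"
proof -
  have "height (take i p) (length (increments (take i p))) = height p (pos p i)" for i
    using height_pos[of p i] by (simp add: height_def)
  then show ?thesis unfolding occ_H_off_def IH_def by (simp add: conj_assoc)
qed

lemma upclosed_GS: "upclosed n (GS n)" by (simp add: upclosed_def)

lemma upclosed_S: "upclosed n (S n)"
  unfolding upclosed_def S_def below_def by (auto intro: order_trans)

lemma down_GS: "a \<in> GS n \<Longrightarrow> {i \<in> IH a \<union> IUD a. mvd a i \<in> GS n} = IH a \<union> IUD a"
  using mvd_GS by blast

lemma down_S: assumes a: "a \<in> S n"
  shows "{i \<in> IH a \<union> IUD a. mvd a i \<in> S n} = {i \<in> IH a. height a (pos a i) \<noteq> 0} \<union> IUD a"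
proof -
  have aG: "a \<in> GS n" and nn: "\<forall>x\<le>2*n. height a x \<ge> 0" using a by (auto simp: S_def)
  have mem: "mvd a i \<in> S n \<longleftrightarrow> height a (Suc (pos a i)) \<ge> 1" if i: "i \<in> IH a \<union> IUD a" for i
  proof -
    have il: "i < length a" using i idx_bound by blast
    have "pos a i < pos a (length a)" using pos_mono il by simp
    then have pl: "Suc (pos a i) \<le> 2*n" using pos_len[of a "length a"] GS_len[OF aG] by simp
    have "mvd a i \<in> S n \<longleftrightarrow> (\<forall>x\<le>2*n. height a x - (if x = Suc (pos a i) then 1 else 0) \<ge> 0)"
      using mvd_GS[OF aG i] mvd_height(1)[OF i] by (simp add: S_def)
    also have "\<dots> \<longleftrightarrow> height a (Suc (pos a i)) \<ge> 1"
    proof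
      assume "\<forall>x\<le>2*n. height a x - (if x = Suc (pos a i) then 1 else 0) \<ge> 0"
      then show "height a (Suc (pos a i)) \<ge> 1" using pl by fastforce
    next
      assume "height a (Suc (pos a i)) \<ge> 1"
      then show "\<forall>x\<le>2*n. height a x - (if x = Suc (pos a i) then 1 else 0) \<ge> 0" using nn by auto
    qed
    finally show ?thesis .
  qed
  show ?thesis
  proof (rule set_eqI, rule iffI)
    fix i assume "i \<in> {i \<in> IH a \<union> IUD a. mvd a i \<in> S n}"
    then have i: "i \<in> IH a \<union> IUD a" and h: "height a (Suc (pos a i)) \<ge> 1" using mem by auto
    show "i \<in> {i \<in> IH a. height a (pos a i) \<noteq> 0} \<union> IUD a"
    proof (cases "i \<in> IH a")
      case True
      then have "height a (Suc (pos a i)) = height a (pos a i)" using mid_height(1) by (auto simp: IH_def)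
      then show ?thesis using True h by simp
    next
      case False then show ?thesis using i by simp
    qed
  next
    fix i assume i: "i \<in> {i \<in> IH a. height a (pos a i) \<noteq> 0} \<union> IUD a"
    then have ii: "i \<in> IH a \<union> IUD a" by blast
    have il: "i < length a" using ii idx_bound by blast
    have "pos a i < pos a (length a)" using pos_mono il by simp
    then have pl: "pos a i < length (increments a)" using pos_len[of a "length a"] by simp
    have "height a (Suc (pos a i)) \<ge> 1"
    proof (cases "i \<in> IH a")
      case True
      then have "height a (Suc (pos a i)) = height a (pos a i)" "height a (pos a i) \<noteq> 0"
        using mid_height(1) i by (auto simp: IH_def IUD_def)
      moreover have "height a (pos a i) \<ge> 0" using nn pl GS_len[OF aG] by simp
      ultimately show ?thesis by simp
    next
      case False
      then have "a!i = U" using i by (auto simp: IUD_def)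
      then have "increments a ! pos a i = 1" using nth_pos[OF il] by simp
      then have "height a (Suc (pos a i)) = height a (pos a i) + 1" using height_diff[OF pl] by simp
      moreover have "height a (pos a i) \<ge> 0" using nn pl GS_len[OF aG] by simp
      ultimately show ?thesis by simp
    qed
    then show "i \<in> {i \<in> IH a \<union> IUD a. mvd a i \<in> S n}" using mem[OF ii] ii by simp
  qed
qed

theorem mainTheorem11:
  fixes n :: nat
  shows "(\<forall>\<gamma>\<in>S n.
            card (upcov (S n) \<gamma>) = occ [H] \<gamma> + occ [D, U] \<gamma> \<and>
            card (downcov (S n) \<gamma>) = occ_H_off \<gamma> + occ [U, D] \<gamma>)
       \<and> (\<forall>\<gamma>\<in>GS n.
            card (upcov (GS n) \<gamma>) = occ [H] \<gamma> + occ [D, U] \<gamma> \<and>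
            card (downcov (GS n) \<gamma>) = occ [H] \<gamma> + occ [U, D] \<gamma>)"
proof (intro conjI ballI)
  fix g assume g: "g \<in> S n"
  show "card (upcov (S n) g) = occ [H] g + occ [D, U] g"
    using card_up[OF upclosed_S g] by (simp add: occ1 occ_DU)
  have "card (downcov (S n) g) = card ({i \<in> IH g. height g (pos g i) \<noteq> 0} \<union> IUD g)"
    using card_down[OF upclosed_S g] down_S[OF g] by simp
  also have "\<dots> = card {i \<in> IH g. height g (pos g i) \<noteq> 0} + card (IUD g)"
    by (rule card_Un_disjoint[OF _ fin_IUD], rule finite_subset[OF _ fin_IH[of g]]) (auto simp: IH_def IUD_def)
  finally show "card (downcov (S n) g) = occ_H_off g + occ [U, D] g"
    by (simp add: occ_off occ_UD)
next
  fix g assume g: "g \<in> GS n"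
  show "card (upcov (GS n) g) = occ [H] g + occ [D, U] g"
    using card_up[OF upclosed_GS g] by (simp add: occ1 occ_DU)
  have "card (downcov (GS n) g) = card (IH g \<union> IUD g)"
    using card_down[OF upclosed_GS g] down_GS[OF g] by simp
  also have "\<dots> = card (IH g) + card (IUD g)"
    by (rule card_Un_disjoint[OF fin_IH fin_IUD]) (auto simp: IH_def IUD_def)
  finally show "card (downcov (GS n) g) = occ [H] g + occ [U, D] g"
    by (simp add: occ1 occ_UD)
qed


end
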